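(* Let $\ell\ge 2$ and $k>\ell$ be integers. Then $\overline{\alpha}(\{1,\dots,\ell-1,k\})=\frac{1}{\ell}$ if $k\not\equiv 0\pmod{\ell}$, and $\overline{\alpha}(\{1,\dots,\ell-1,k\})=\frac{k}{\ell(k+1)}$ if $k\equiv 0\pmod{\ell}$.
   Context: For a finite set $S$ of positive integers, the distance graph $G(S)$ has vertex set $\mathbb{Z}$, with $i,j$ adjacent iff $|i-j|\in S$. The density of $A\subseteq\mathbb{Z}$ is $\delta(A)=\limsup_{N\to\infty}\frac{|A\cap[-N,N]|}{2N+1}$, and the independence ratio $\overline{\alpha}(S)$ is the supremum of $\delta(A)$ over independent sets $A$ of $G(S)$. *)

theory Defs
  imports "HOL-Analysis.Analysis"
begin

definition dist_adj :: "nat set \<Rightarrow> int \<Rightarrow> int \<Rightarrow> bool" where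
  "dist_adj S i j \<longleftrightarrow> nat \<bar>i - j\<bar> \<in> S"

definition dist_independent :: "nat set \<Rightarrow> int set \<Rightarrow> bool" where
  "dist_independent S A \<longleftrightarrow> (\<forall>i\<in>A. \<forall>j\<in>A. \<not> dist_adj S i j)"

definition upper_density :: "int set \<Rightarrow> ereal" where
  "upper_density A = limsup (\<lambda>N::nat. ereal (real (card (A \<inter> {- int N .. int N})) / (2 * real N + 1)))"

definition indep_ratio :: "nat set \<Rightarrow> ereal" where
  "indep_ratio S = (SUP A \<in> {A. dist_independent S A}. upper_density A)"

end

theory Submission
  imports Defs "HOL-Real_Asymp.Real_Asymp"
begin

lemma cover_le:
  fixes A :: "int set" and p c :: nat
  assumes win: "\<And>x. card (A \<inter> {x..<x + int p}) \<le> c"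
  shows "card (A \<inter> {a..<a + int (q * p)}) \<le> q * c"
proof (induction q)
  case 0 then show ?case by simp
next
  case (Suc q)
  have eq: "{a..<a + int (Suc q * p)} = {a..<a + int (q * p)} \<union> {a + int (q*p)..<a + int (q*p) + int p}"
    by (auto simp del: of_nat_mult)
  have "card (A \<inter> {a..<a + int (Suc q * p)}) \<le> card (A \<inter> {a..<a + int (q * p)}) + card (A \<inter> {a + int (q*p)..<a + int (q*p) + int p})"
    unfolding eq Int_Un_distrib by (rule card_Un_le)
  also have "\<dots> \<le> q * c + c" using Suc.IH win[of "a + int (q*p)"] by linarith
  finally show ?case by simp
qed

lemma periodic_window:
  fixes A R :: "int set" and p :: nat
  assumes per: "\<And>n. n \<in> A \<longleftrightarrow> n mod int p \<in> R" and R: "R \<subseteq> {0..<int p}"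
  shows "card (A \<inter> {x..<x + int p}) = card R"
proof -
  have inj: "inj_on (\<lambda>n. n mod int p) (A \<inter> {x..<x + int p})"
  proof (rule inj_onI)
    fix m n assume m: "m \<in> A \<inter> {x..<x + int p}" and n: "n \<in> A \<inter> {x..<x + int p}"
      and e: "m mod int p = n mod int p"
    then have "int p dvd (m - n)" by (simp add: mod_eq_dvd_iff)
    then obtain t where t: "m - n = int p * t" by (auto elim: dvdE)
    have "\<bar>m - n\<bar> < int p" using m n by auto
    then have "\<bar>t\<bar> < 1" using t
      by (metis abs_mult abs_of_nat mult.right_neutral mult_less_cancel_left_pos not_less not_one_le_zero of_nat_0_less_iff zero_less_abs_iff abs_0_eq mult_zero_left linorder_not_le)
    then show "m = n" using t by simp
  qed
  have img: "(\<lambda>n. n mod int p) ` (A \<inter> {x..<x + int p}) = R"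
  proof
    show "(\<lambda>n. n mod int p) ` (A \<inter> {x..<x + int p}) \<subseteq> R" using per by auto
    show "R \<subseteq> (\<lambda>n. n mod int p) ` (A \<inter> {x..<x + int p})"
    proof
      fix r assume r: "r \<in> R"
      then have r0: "0 \<le> r" "r < int p" using R by auto
      define n where "n = x + (r - x) mod int p"
      have "n mod int p = r" unfolding n_def using r0
        by (metis add.commute add_diff_cancel_left' mod_add_right_eq mod_pos_pos_trivial diff_add_cancel)
      moreover have "n \<in> {x..<x + int p}" unfolding n_def using r0 by simp
      ultimately show "r \<in> (\<lambda>n. n mod int p) ` (A \<inter> {x..<x + int p})"
        using per r by (metis IntI image_eqI)
    qed
  qed
  show ?thesis using card_image[OF inj] img by simp
qed

lemma cover_eq:
  fixes A :: "int set" and p c :: nat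
  assumes win: "\<And>x. card (A \<inter> {x..<x + int p}) = c"
  shows "card (A \<inter> {a..<a + int (q * p)}) = q * c"
proof (induction q)
  case 0 then show ?case by simp
next
  case (Suc q)
  have eq: "{a..<a + int (Suc q * p)} = {a..<a + int (q * p)} \<union> {a + int (q*p)..<a + int (q*p) + int p}"
    by (auto simp del: of_nat_mult)
  have "card (A \<inter> {a..<a + int (Suc q * p)}) = card (A \<inter> {a..<a + int (q * p)}) + card (A \<inter> {a + int (q*p)..<a + int (q*p) + int p})"
    unfolding eq Int_Un_distrib by (rule card_Un_disjoint) auto
  also have "\<dots> = q * c + c" using Suc.IH win[of "a + int (q*p)"] by linarith
  finally show ?case by simp
qed

lemma divmod_real:
  fixes n p :: nat
  shows "real n = real (n div p) * real p + real (n mod p)"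
  by (metis div_mult_mod_eq of_nat_add of_nat_mult)

lemma alg_up:
  fixes X M p c :: real
  assumes "0 < M" "0 < p" "X * p \<le> (M + p) * c"
  shows "X / M \<le> c / p + c / M"
proof -
  have "X / M = (X * p) / (M * p)" using assms by simp
  also have "\<dots> \<le> ((M + p) * c) / (M * p)" using assms by (intro divide_right_mono) auto
  also have "\<dots> = c / p + c / M" using assms by (simp add: field_simps)
  finally show ?thesis .
qed

lemma alg_lo:
  fixes X M p c :: real
  assumes "0 < M" "0 < p" "(M - p) * c \<le> X * p"
  shows "c / p - c / M \<le> X / M"
proof -
  have "c / p - c / M = ((M - p) * c) / (M * p)" using assms by (simp add: field_simps)
  also have "\<dots> \<le> (X * p) / (M * p)" using assms by (intro divide_right_mono) auto
  also have "\<dots> = X / M" using assms by simp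
  finally show ?thesis .
qed

lemma density_upper:
  fixes A :: "int set" and p c :: nat
  assumes p: "p > 0" and win: "\<And>x. card (A \<inter> {x..<x + int p}) \<le> c"
  shows "upper_density A \<le> ereal (real c / real p)"
proof -
  define g where "g = (\<lambda>N::nat. ereal (real c / real p + real c / (2 * real N + 1)))"
  have le: "ereal (real (card (A \<inter> {- int N .. int N})) / (2 * real N + 1)) \<le> g N" for N
  proof -
    define d where "d = (2*N+1) div p"
    define r where "r = (2*N+1) mod p"
    have rp: "r < p" unfolding r_def using p by simp
    have dm: "real (2*N+1) = real d * real p + real r" unfolding d_def r_def by (rule divmod_real)
    have nat_dm: "2*N+1 = d*p + r" unfolding d_def r_def by simp
    have qp: "2*N+1 < (d+1)*p" using nat_dm rp by simp
    have sub: "A \<inter> {- int N .. int N} \<subseteq> A \<inter> {- int N..< - int N + int ((d+1)*p)}"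
    proof -
      have qpi: "2 * int N + 1 < int ((d+1)*p)" using qp by linarith
      show ?thesis using qpi by (auto simp del: of_nat_mult of_nat_add)
    qed
    have "card (A \<inter> {- int N .. int N}) \<le> card (A \<inter> {- int N..< - int N + int ((d+1)*p)})"
      by (rule card_mono[OF _ sub]) simp
    also have "\<dots> \<le> (d+1)*c" by (rule cover_le[OF win])
    finally have cc: "real (card (A \<inter> {- int N .. int N})) \<le> (real d + 1) * real c"
      by (metis of_nat_1 of_nat_add of_nat_le_iff of_nat_mult)
    have pos: "(0::real) < 2 * real N + 1" by simp
    have pp: "(0::real) < real p" using p by simp
    have "real (card (A \<inter> {- int N .. int N})) * real p \<le> (real d * real p + real p) * real c"
      using mult_right_mono[OF cc, of "real p"] by (simp add: algebra_simps)
    also have "\<dots> \<le> (2 * real N + 1 + real p) * real c"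
      using dm by (intro mult_right_mono) auto
    finally have key: "real (card (A \<inter> {- int N .. int N})) * real p \<le> (2 * real N + 1 + real p) * real c" .
    have "real (card (A \<inter> {- int N .. int N})) / (2 * real N + 1) \<le> real c / real p + real c / (2 * real N + 1)"
      by (rule alg_up[OF pos pp key])
    then show ?thesis unfolding g_def by simp
  qed
  have "((\<lambda>N::nat. real c / real p + real c / (2 * real N + 1)) \<longlongrightarrow> real c / real p) sequentially"
    by real_asymp
  then have "(g \<longlongrightarrow> ereal (real c / real p)) sequentially" unfolding g_def by simp
  then have lg: "limsup g = ereal (real c / real p)" by (intro lim_imp_Limsup) auto
  show ?thesis unfolding upper_density_def lg[symmetric]
    by (rule Limsup_mono) (use le in auto)
qed

lemma density_lower:
  fixes A :: "int set" and p c :: nat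
  assumes p: "p > 0" and win: "\<And>x. card (A \<inter> {x..<x + int p}) = c"
  shows "upper_density A \<ge> ereal (real c / real p)"
proof -
  define g where "g = (\<lambda>N::nat. ereal (real c / real p - real c / (2 * real N + 1)))"
  have le: "g N \<le> ereal (real (card (A \<inter> {- int N .. int N})) / (2 * real N + 1))" for N
  proof -
    define d where "d = (2*N+1) div p"
    define r where "r = (2*N+1) mod p"
    have rp: "r < p" unfolding r_def using p by simp
    have dm: "real (2*N+1) = real d * real p + real r" unfolding d_def r_def by (rule divmod_real)
    have nat_dm: "2*N+1 = d*p + r" unfolding d_def r_def by simp
    have qp: "d*p \<le> 2*N+1" using nat_dm by simp
    have sub: "A \<inter> {- int N..< - int N + int (d*p)} \<subseteq> A \<inter> {- int N .. int N}"
    proof -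
      have qpi: "int (d*p) \<le> 2 * int N + 1" using qp by linarith
      show ?thesis using qpi by (auto simp del: of_nat_mult of_nat_add)
    qed
    have "d*c = card (A \<inter> {- int N..< - int N + int (d*p)})" by (rule cover_eq[OF win, symmetric])
    also have "\<dots> \<le> card (A \<inter> {- int N .. int N})"
      by (rule card_mono[OF _ sub]) simp
    finally have cc: "real d * real c \<le> real (card (A \<inter> {- int N .. int N}))"
      by (metis of_nat_le_iff of_nat_mult)
    have pos: "(0::real) < 2 * real N + 1" by simp
    have pp: "(0::real) < real p" using p by simp
    have "(2 * real N + 1 - real p) * real c \<le> (real d * real p) * real c"
      using dm rp by (intro mult_right_mono) auto
    also have "\<dots> \<le> real (card (A \<inter> {- int N .. int N})) * real p"
      using mult_right_mono[OF cc, of "real p"] by (simp add: algebra_simps)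
    finally have key: "(2 * real N + 1 - real p) * real c \<le> real (card (A \<inter> {- int N .. int N})) * real p" .
    have "real c / real p - real c / (2 * real N + 1) \<le> real (card (A \<inter> {- int N .. int N})) / (2 * real N + 1)"
      by (rule alg_lo[OF pos pp key])
    then show ?thesis unfolding g_def by simp
  qed
  have "((\<lambda>N::nat. real c / real p - real c / (2 * real N + 1)) \<longlongrightarrow> real c / real p) sequentially"
    by real_asymp
  then have "(g \<longlongrightarrow> ereal (real c / real p)) sequentially" unfolding g_def by simp
  then have lg: "limsup g = ereal (real c / real p)" by (intro lim_imp_Limsup) auto
  show ?thesis unfolding upper_density_def lg[symmetric]
    by (rule Limsup_mono) (use le in auto)
qed

lemma win_l:
  fixes A :: "int set" and S :: "nat set" and l :: nat
  assumes ind: "dist_independent S A" and sub: "{1..l-1} \<subseteq> S"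
  shows "card (A \<inter> {x..<x + int l}) \<le> 1"
proof -
  have "\<forall>a\<in>A \<inter> {x..<x + int l}. \<forall>b\<in>A \<inter> {x..<x + int l}. a = b"
  proof (intro ballI)
    fix a b assume a: "a \<in> A \<inter> {x..<x + int l}" and b: "b \<in> A \<inter> {x..<x + int l}"
    show "a = b"
    proof (rule ccontr)
      assume "a \<noteq> b"
      then have "nat \<bar>a - b\<bar> \<in> {1..l-1}" using a b by auto
      then have "dist_adj S a b" using sub unfolding dist_adj_def by auto
      then show False using ind a b unfolding dist_independent_def by auto
    qed
  qed
  then show ?thesis using card_le_Suc0_iff_eq[of "A \<inter> {x..<x + int l}"] by simp
qed

lemma win_k:
  fixes A :: "int set" and S :: "nat set" and l k m :: nat
  assumes ind: "dist_independent S A" and sub: "{1..l-1} \<subseteq> S" and kS: "k \<in> S"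
    and km: "k = m * l"
  shows "card (A \<inter> {x..<x + int (k+1)}) \<le> m"
proof -
  have w: "\<And>y. card (A \<inter> {y..<y + int l}) \<le> 1" by (rule win_l[OF ind sub])
  show ?thesis
  proof (cases "x \<in> A")
    case True
    have "x + int k \<notin> A"
    proof
      assume "x + int k \<in> A"
      moreover have "dist_adj S x (x + int k)" using kS unfolding dist_adj_def by simp
      ultimately show False using True ind unfolding dist_independent_def by auto
    qed
    have "A \<inter> {x..<x + int (k+1)} \<subseteq> A \<inter> {x..<x + int k}"
    proof
      fix y assume y: "y \<in> A \<inter> {x..<x + int (k+1)}"
      then have "y \<noteq> x + int k" using \<open>x + int k \<notin> A\<close> by auto
      then show "y \<in> A \<inter> {x..<x + int k}" using y by auto
    qed
    then have "A \<inter> {x..<x + int (k+1)} \<subseteq> A \<inter> {x..<x + int (m*l)}" using km by simp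
    then have "card (A \<inter> {x..<x + int (k+1)}) \<le> card (A \<inter> {x..<x + int (m*l)})"
      by (intro card_mono) auto
    also have "\<dots> \<le> m * 1" by (rule cover_le[OF w])
    finally show ?thesis by simp
  next
    case False
    have "A \<inter> {x..<x + int (k+1)} \<subseteq> A \<inter> {x+1..<x + 1 + int k}"
    proof
      fix y assume y: "y \<in> A \<inter> {x..<x + int (k+1)}"
      then have "y \<noteq> x" using False by auto
      then show "y \<in> A \<inter> {x+1..<x + 1 + int k}" using y by auto
    qed
    then have "A \<inter> {x..<x + int (k+1)} \<subseteq> A \<inter> {x+1..<x + 1 + int (m*l)}" using km by simp
    then have "card (A \<inter> {x..<x + int (k+1)}) \<le> card (A \<inter> {x+1..<x + 1 + int (m*l)})"
      by (intro card_mono) auto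
    also have "\<dots> \<le> m * 1" by (rule cover_le[OF w])
    finally show ?thesis by simp
  qed
qed

lemma indep1:
  fixes l k :: nat
  assumes "l \<ge> 2" "\<not> l dvd k"
  shows "dist_independent ({1..l-1} \<union> {k}) {n. n mod int l \<in> {0}}"
  unfolding dist_independent_def dist_adj_def
proof (intro ballI notI)
  fix a b assume a: "a \<in> {n. n mod int l \<in> {0}}" and b: "b \<in> {n. n mod int l \<in> {0}}"
    and ab: "nat \<bar>a - b\<bar> \<in> {1..l-1} \<union> {k}"
  have dv: "int l dvd \<bar>a - b\<bar>" using a b by (simp add: mod_eq_dvd_iff[symmetric])
  then obtain t where t: "\<bar>a - b\<bar> = int l * t" by (metis dvdE)
  show False
  proof (cases "nat \<bar>a - b\<bar> = k")
    case True
    then have "int k = \<bar>a - b\<bar>" by simp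
    then have "int l dvd int k" using dv by simp
    then show False using assms(2) by simp
  next
    case False
    then have "1 \<le> \<bar>a - b\<bar>" "\<bar>a - b\<bar> < int l" using ab assms(1) by auto
    then show False using t
      by (smt (verit) mult_le_cancel_left1 mult_nonneg_nonpos of_nat_0_le_iff)
  qed
qed

lemma indep2_core:
  fixes l m :: nat and a b :: int
  assumes l2: "l \<ge> 2" and m1: "m \<ge> 1"
    and a: "a mod int (m*l+1) \<in> (\<lambda>i. int (i*l)) ` {..<m}"
    and b: "b mod int (m*l+1) \<in> (\<lambda>i. int (i*l)) ` {..<m}"
    and ab: "a < b"
  shows "\<not> (b - a < int l) \<and> b - a \<noteq> int (m*l)"
proof -
  define K where "K = int (m*l+1)"
  obtain i where i: "i < m" "a mod K = int (i*l)" using a unfolding K_def by auto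
  obtain j where j: "j < m" "b mod K = int (j*l)" using b unfolding K_def by auto
  define d where "d = b - a"
  have d0: "d > 0" using ab unfolding d_def by simp
  have bd: "b = a + d" unfolding d_def by simp
  have il: "int (i*l) \<le> int (m*l) - int l"
  proof -
    have "i*l + l \<le> m*l" using i(1) by (metis add.commute mult_Suc mult_le_mono1 Suc_leI)
    then show ?thesis by linarith
  qed
  have p1: "\<not> (d < int l)"
  proof
    assume dl: "d < int l"
    have "b mod K = (a mod K + d) mod K" unfolding bd by (simp add: mod_add_left_eq)
    also have "\<dots> = a mod K + d"
      using i(2) il dl d0 unfolding K_def by (intro mod_pos_pos_trivial) auto
    finally have "int (j*l) = int (i*l) + d" using i j by simp
    then have "d = int l * (int j - int i)" by (simp add: algebra_simps)
    then show False using dl d0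
      by (smt (verit) mult_le_cancel_left1 mult_nonneg_nonpos of_nat_0_le_iff)
  qed
  have p2: "d \<noteq> int (m*l)"
  proof
    assume dk: "d = int (m*l)"
    have "b mod K = (a mod K + d) mod K" unfolding bd by (simp add: mod_add_left_eq)
    also have "\<dots> = (int (i*l) + int (m*l)) mod K" using i dk by simp
    finally have bm: "int (j*l) = (int (i*l) + int (m*l)) mod K" using j by simp
    show False
    proof (cases "i = 0")
      case True
      then have "int (j*l) = int (m*l)" using bm unfolding K_def by simp
      then have "j*l = m*l" by linarith
      then have "j = m" using l2 by simp
      then show False using j by simp
    next
      case False
      then have "i*l \<noteq> 0" using l2 by simp
      then have il1: "int (i*l) \<ge> 1" by linarith
      have "(int (i*l) + int (m*l)) mod K = ((int (i*l) - 1) + K) mod K" unfolding K_def by simp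
      also have "\<dots> = (int (i*l) - 1) mod K" by simp
      also have "\<dots> = int (i*l) - 1" using il1 il unfolding K_def by (intro mod_pos_pos_trivial) auto
      finally have "int (j*l) = int (i*l) - 1" using bm by simp
      then have "int l * (int i - int j) = 1" by (simp add: algebra_simps)
      then have "int l dvd 1" by (metis dvdI)
      then show False using l2 by simp
    qed
  qed
  show ?thesis using p1 p2 unfolding d_def by simp
qed

lemma indep2:
  fixes l m :: nat
  assumes l2: "l \<ge> 2" and m1: "m \<ge> 1"
  shows "dist_independent ({1..l-1} \<union> {m*l}) {n. n mod int (m*l+1) \<in> (\<lambda>i. int (i*l)) ` {..<m}}"
  unfolding dist_independent_def dist_adj_def
proof (intro ballI notI)
  fix a b assume a: "a \<in> {n. n mod int (m*l+1) \<in> (\<lambda>i. int (i*l)) ` {..<m}}"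
    and b: "b \<in> {n. n mod int (m*l+1) \<in> (\<lambda>i. int (i*l)) ` {..<m}}"
    and ab: "nat \<bar>a - b\<bar> \<in> {1..l-1} \<union> {m*l}"
  have ml: "m * l > 0" using l2 m1 by simp
  consider "a < b" | "a = b" | "b < a" by linarith
  then show False
  proof cases
    case 1
    have "\<not> (b - a < int l) \<and> b - a \<noteq> int (m*l)" using indep2_core[OF l2 m1 _ _ 1] a b by simp
    moreover have e: "int (nat (b - a)) = b - a" using 1 by simp
    ultimately have c: "\<not> (b - a < int l)" "b - a \<noteq> int (m*l)" by auto
    have ae: "\<bar>a - b\<bar> = b - a" using 1 by simp
    from ab consider "nat (b - a) \<le> l - 1" | "nat (b - a) = m*l" unfolding ae by auto
    then show False
    proof cases
      case 1
      then have "int (nat (b - a)) < int l" using l2 by linarith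
      then show False using c e by simp
    next
      case 2
      then have "int (nat (b - a)) = int (m*l)" by simp
      then show False using c e by simp
    qed
  next
    case 2 then show False using ab ml by simp
  next
    case 3
    have "\<not> (a - b < int l) \<and> a - b \<noteq> int (m*l)" using indep2_core[OF l2 m1 _ _ 3] a b by simp
    moreover have e: "int (nat (a - b)) = a - b" using 3 by simp
    ultimately have c: "\<not> (a - b < int l)" "a - b \<noteq> int (m*l)" by auto
    have ae: "\<bar>a - b\<bar> = a - b" using 3 by simp
    from ab consider "nat (a - b) \<le> l - 1" | "nat (a - b) = m*l" unfolding ae by auto
    then show False
    proof cases
      case 1
      then have "int (nat (a - b)) < int l" using l2 by linarith
      then show False using c e by simp
    next
      case 2
      then have "int (nat (a - b)) = int (m*l)" by simp
      then show False using c e by simp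
    qed
  qed
qed

theorem theorem22:
  fixes l k :: nat
  assumes "l \<ge> 2" and "k > l"
  shows "indep_ratio ({1..l-1} \<union> {k}) =
           (if \<not> l dvd k then ereal (1 / real l)
            else ereal (real k / (real l * (real k + 1))))"
proof -
  define S where "S = {1..l-1} \<union> {k}"
  have sub: "{1..l-1} \<subseteq> S" and kS: "k \<in> S" unfolding S_def by auto
  have l0: "l > 0" using assms by simp
  show ?thesis
  proof (cases "l dvd k")
    case False
    have up: "upper_density A \<le> ereal (1 / real l)" if "dist_independent S A" for A
      using density_upper[of l A 1, OF l0 win_l[OF that sub]] by simp
    define A0 where "A0 = {n::int. n mod int l \<in> {0}}"
    have ind: "dist_independent S A0" unfolding S_def A0_def by (rule indep1) (use assms False in auto)
    have w: "card (A0 \<inter> {x..<x + int l}) = 1" for x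
      using periodic_window[of A0 l "{0}" x] l0 unfolding A0_def by simp
    have lo: "ereal (1 / real l) \<le> upper_density A0"
      using density_lower[of l A0 1, OF l0 w] by simp
    have "indep_ratio S = ereal (1 / real l)"
      unfolding indep_ratio_def
    proof (rule antisym)
      show "(SUP A\<in>{A. dist_independent S A}. upper_density A) \<le> ereal (1 / real l)"
        by (rule SUP_least) (use up in auto)
      show "ereal (1 / real l) \<le> (SUP A\<in>{A. dist_independent S A}. upper_density A)"
        by (rule order_trans[OF lo]) (rule SUP_upper, use ind in auto)
    qed
    then show ?thesis using False unfolding S_def by simp
  next
    case True
    then obtain m where km: "k = m * l" by (metis dvdE mult.commute)
    have m1: "m \<ge> 1" using km assms by (cases m) auto
    have "real k / (real l * (real k + 1)) = (real l * real m) / (real l * (real k + 1))"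
      using km by simp
    also have "\<dots> = real m / (real k + 1)" using l0 by (intro mult_divide_mult_cancel_left) simp
    finally have bnd: "real k / (real l * (real k + 1)) = real m / real (k+1)" by simp
    have k1: "k + 1 > 0" by simp
    have up: "upper_density A \<le> ereal (real m / real (k+1))" if "dist_independent S A" for A
      by (rule density_upper[OF k1 win_k[OF that sub kS km]])
    define R where "R = (\<lambda>i. int (i*l)) ` {..<m}"
    define A0 where "A0 = {n::int. n mod int (m*l+1) \<in> R}"
    have ind: "dist_independent S A0" unfolding S_def A0_def R_def km
      by (rule indep2) (use assms m1 in auto)
    have injR: "inj_on (\<lambda>i. int (i*l)) {..<m}" using l0 by (auto intro!: inj_onI)
    have cR: "card R = m" unfolding R_def using card_image[OF injR] by simp
    have RK: "R \<subseteq> {0..<int (k+1)}"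
    proof
      fix r assume "r \<in> R"
      then obtain i where i: "i < m" "r = int (i*l)" unfolding R_def by auto
      have "i*l < m*l" using i(1) l0 by simp
      then have "int (i*l) < int (k+1)" using km by linarith
      then show "r \<in> {0..<int (k+1)}" using i by simp
    qed
    have w: "card (A0 \<inter> {x..<x + int (k+1)}) = m" for x
      using periodic_window[of A0 "k+1" R x] RK cR unfolding A0_def km by simp
    have lo: "ereal (real m / real (k+1)) \<le> upper_density A0"
      by (rule density_lower[OF k1 w])
    have "indep_ratio S = ereal (real m / real (k+1))"
      unfolding indep_ratio_def
    proof (rule antisym)
      show "(SUP A\<in>{A. dist_independent S A}. upper_density A) \<le> ereal (real m / real (k+1))"
        by (rule SUP_least) (use up in auto)
      show "ereal (real m / real (k+1)) \<le> (SUP A\<in>{A. dist_independent S A}. upper_density A)"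
        by (rule order_trans[OF lo]) (rule SUP_upper, use ind in auto)
    qed
    then show ?thesis using True bnd unfolding S_def by simp
  qed
qed

end
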